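(* Let $X,Y,\tilde X,\tilde Y$ be cellular spaces with $X,\tilde X$ compact, let $r\ge0$, and let $g\colon Y^X\to\tilde Y^{\tilde X}$ be a primitive transform. If $a,b\colon X\to Y$ are maps with $a\overset{r}{\approx}b$, then $g(a)\overset{r}{\approx}g(b)$.
   Context: Cellular space = based CW complex; maps based unless called unbased. $Y^X$ = space of based maps $X\to Y$ (compact-open), based at the constant map. A transform is an unbased (continuous) map $g\colon Y^X\to\tilde Y^{\tilde X}$; it is primitive if for each $p\in\tilde X$ there are a point $k(p)\in X$ and an unbased map $h^p\colon Y\to\tilde Y$ such that $g(d)(p)=h^p(d(k(p)))$ for all $d\in Y^X$. Strong similarity: $\langle W\rangle$ = free abelian group on a set $W$. $Y^X_a$ = path component of $a$; $V\mapsto V|_R$ restriction; $\mathcal F_n(X)$ = finite $R\subseteq X$ containing the basepoint with $|R|\le n+1$; $\langle Y^X\rangle^{(s)}=\{V:V|_R=0\ \forall R\in\mathcal F_{s-1}(X)\}$. For unbased $U,V$: $V^{(U)}$ = unbased maps; $\Xi^U(v)$ = constant map at $v$; for $U=\coprod_iU_i$, $\boxed{\sqcup}_i\langle w_i\rangle=\langle w\rangle$, $w|_{U_i}=w_i$, multilinear. For nonempty finite $E$: simplex $\Delta E$, faces $\Delta F$; layouts = sets $A$ of pairwise disjoint nonempty subsets; $\Delta[A]=\coprod_{F\in A}\Delta F$; $S\in\langle V^{(\Delta E)}\rangle$ fissile if $S|_{\Delta[A]}=\boxed{\sqcup}_{F\in A}S|_{\Delta F}$ for all layouts. $U\wr X=(U\times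 X)/(U\times\{x_0\})$, $\#^X(w)(u\wr x)=w(u)(x)$, $\langle (Y^X)^{(U)}\rangle^{(s)}_X=\langle\#^X\rangle^{-1}\langle Y^{U\wr X}\rangle^{(s)}$. $a\overset{r}{\approx}b$ iff for each nonempty finite $E$ there is a fissile $S\in\langle (Y^X_a)^{(\Delta E)}\rangle$ with $\langle\Xi^{\Delta E}(b)\rangle-S\in\langle (Y^X)^{(\Delta E)}\rangle^{(r+1)}_X$. *)

theory Defs
  imports "HOL-Analysis.Analysis"
begin

definition disk_pts :: "nat \<Rightarrow> (nat \<Rightarrow> real) set" where
  "disk_pts n = {x \<in> PiE {..<n} (\<lambda>_. UNIV). (\<Sum>i<n. (x i)\<^sup>2) \<le> 1}"

definition open_disk_pts :: "nat \<Rightarrow> (nat \<Rightarrow> real) set" where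
  "open_disk_pts n = {x \<in> PiE {..<n} (\<lambda>_. UNIV). (\<Sum>i<n. (x i)\<^sup>2) < 1}"

definition sphere_pts :: "nat \<Rightarrow> (nat \<Rightarrow> real) set" where
  "sphere_pts n = {x \<in> PiE {..<n} (\<lambda>_. UNIV). (\<Sum>i<n. (x i)\<^sup>2) = 1}"

definition disk_top :: "nat \<Rightarrow> (nat \<Rightarrow> real) topology" where
  "disk_top n = subtopology (product_topology (\<lambda>_. euclideanreal) {..<n}) (disk_pts n)"

text \<open>A based CW complex: a Hausdorff space with a partition into cells, each cell of
  dimension n having a characteristic map from the closed n-disk which maps the open disk
  homeomorphically onto the cell and the boundary sphere into finitely many cells of lower
  dimension (closure finiteness), the topology being the weak topology with respect to the
  closed cells; the basepoint is a 0-cell.\<close>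

definition cellular_space :: "'a topology \<Rightarrow> 'a \<Rightarrow> bool" where
  "cellular_space X x0 \<longleftrightarrow> Hausdorff_space X \<and> x0 \<in> topspace X \<and>
    (\<exists>C dim. pairwise disjnt C \<and> \<Union>C = topspace X \<and> {} \<notin> C \<and> {x0} \<in> C \<and> dim {x0} = (0::nat) \<and>
       (\<forall>e\<in>C. \<exists>\<Phi>. continuous_map (disk_top (dim e)) X \<Phi> \<and>
            homeomorphic_map (subtopology (disk_top (dim e)) (open_disk_pts (dim e)))
                             (subtopology X e) \<Phi> \<and>
            (\<exists>F. F \<subseteq> C \<and> finite F \<and> (\<forall>e'\<in>F. dim e' < dim e) \<and>
                 \<Phi> ` sphere_pts (dim e) \<subseteq> \<Union>F)) \<and>
       (\<forall>A. A \<subseteq> topspace X \<longrightarrow>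
          (closedin X A \<longleftrightarrow> (\<forall>e\<in>C. closedin (subtopology X (X closure_of e)) (A \<inter> X closure_of e)))))"

text \<open>Maps are represented extensionally (value \<open>undefined\<close> outside the domain).\<close>

definition based_maps :: "'a topology \<Rightarrow> 'a \<Rightarrow> 'b topology \<Rightarrow> 'b \<Rightarrow> ('a \<Rightarrow> 'b) set" where
  "based_maps X x0 Y y0 = {f. continuous_map X Y f \<and> f x0 = y0 \<and> f \<in> extensional (topspace X)}"

definition unbased_maps :: "'a topology \<Rightarrow> 'b topology \<Rightarrow> ('a \<Rightarrow> 'b) set" where
  "unbased_maps U V = {f. continuous_map U V f \<and> f \<in> extensional (topspace U)}"

definition compact_open_top :: "'a topology \<Rightarrow> 'b topology \<Rightarrow> ('a \<Rightarrow> 'b) set \<Rightarrow> ('a \<Rightarrow> 'b) topology" where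
  "compact_open_top X Y M = topology_generated_by
     {{f \<in> M. f ` K \<subseteq> U} | K U. compactin X K \<and> openin Y U}"

definition map_space :: "'a topology \<Rightarrow> 'a \<Rightarrow> 'b topology \<Rightarrow> 'b \<Rightarrow> ('a \<Rightarrow> 'b) topology" where
  "map_space X x0 Y y0 = compact_open_top X Y (based_maps X x0 Y y0)"

definition transform :: "'a topology \<Rightarrow> 'a \<Rightarrow> 'b topology \<Rightarrow> 'b \<Rightarrow>
     'c topology \<Rightarrow> 'c \<Rightarrow> 'd topology \<Rightarrow> 'd \<Rightarrow> (('a \<Rightarrow> 'b) \<Rightarrow> ('c \<Rightarrow> 'd)) \<Rightarrow> bool" where
  "transform X x0 Y y0 X' x0' Y' y0' g \<longleftrightarrow>
     continuous_map (map_space X x0 Y y0) (map_space X' x0' Y' y0') g"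

definition primitive_transform :: "'a topology \<Rightarrow> 'a \<Rightarrow> 'b topology \<Rightarrow> 'b \<Rightarrow>
     'c topology \<Rightarrow> 'c \<Rightarrow> 'd topology \<Rightarrow> 'd \<Rightarrow> (('a \<Rightarrow> 'b) \<Rightarrow> ('c \<Rightarrow> 'd)) \<Rightarrow> bool" where
  "primitive_transform X x0 Y y0 X' x0' Y' y0' g \<longleftrightarrow>
     transform X x0 Y y0 X' x0' Y' y0' g \<and>
     (\<forall>p\<in>topspace X'. \<exists>k\<in>topspace X. \<exists>h. continuous_map Y Y' h \<and>
         (\<forall>d\<in>based_maps X x0 Y y0. g d p = h (d k)))"

definition free_ab :: "'w set \<Rightarrow> ('w \<Rightarrow> int) set" where
  "free_ab W = {V. finite {w. V w \<noteq> 0} \<and> {w. V w \<noteq> 0} \<subseteq> W}"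

definition gen :: "'w \<Rightarrow> ('w \<Rightarrow> int)" where
  "gen w = (\<lambda>v. if v = w then 1 else 0)"

definition lin :: "('w \<Rightarrow> 'v) \<Rightarrow> ('w \<Rightarrow> int) \<Rightarrow> ('v \<Rightarrow> int)" where
  "lin f V = (\<lambda>v. \<Sum>w\<in>{w. V w \<noteq> 0 \<and> f w = v}. V w)"

definition fin_pointed :: "nat \<Rightarrow> 'a set \<Rightarrow> 'a \<Rightarrow> 'a set set" where
  "fin_pointed n Z z0 = {R. finite R \<and> R \<subseteq> Z \<and> z0 \<in> R \<and> card R \<le> n + 1}"

text \<open>\<open>\<langle>Y^Z\<rangle>^{(s)}\<close> inside \<open>\<langle>M\<rangle>\<close>, where Z is the point set with basepoint z0;
  \<open>s \<ge> 1\<close> is assumed where used (so that \<open>s - 1\<close> is the honest predecessor).\<close>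
definition filt :: "nat \<Rightarrow> 'a set \<Rightarrow> 'a \<Rightarrow> ('a \<Rightarrow> 'b) set \<Rightarrow> (('a \<Rightarrow> 'b) \<Rightarrow> int) set" where
  "filt s Z z0 M = {V \<in> free_ab M. \<forall>R\<in>fin_pointed (s - 1) Z z0. lin (\<lambda>d. restrict d R) V = (\<lambda>_. 0)}"

definition simplex_pts :: "nat set \<Rightarrow> (nat \<Rightarrow> real) set" where
  "simplex_pts E = {t \<in> PiE E (\<lambda>_. UNIV). (\<forall>i\<in>E. 0 \<le> t i) \<and> sum t E = 1}"

definition simplex_top :: "nat set \<Rightarrow> (nat \<Rightarrow> real) topology" where
  "simplex_top E = subtopology (product_topology (\<lambda>_. euclideanreal) E) (simplex_pts E)"

definition face_pts :: "nat set \<Rightarrow> nat set \<Rightarrow> (nat \<Rightarrow> real) set" where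
  "face_pts E F = {t \<in> simplex_pts E. \<forall>i\<in>E - F. t i = 0}"

definition layout :: "nat set \<Rightarrow> nat set set \<Rightarrow> bool" where
  "layout E A \<longleftrightarrow> (\<forall>F\<in>A. F \<noteq> {} \<and> F \<subseteq> E) \<and> pairwise disjnt A"

definition glue :: "nat set \<Rightarrow> nat set set \<Rightarrow> (nat set \<Rightarrow> (nat \<Rightarrow> real) \<Rightarrow> 'v) \<Rightarrow> (nat \<Rightarrow> real) \<Rightarrow> 'v" where
  "glue E A c = (\<lambda>t. if \<exists>F\<in>A. t \<in> face_pts E F
                     then c (SOME F. F \<in> A \<and> t \<in> face_pts E F) t else undefined)"

definition glue_sum :: "nat set \<Rightarrow> nat set set \<Rightarrow> (nat set \<Rightarrow> ((nat \<Rightarrow> real) \<Rightarrow> 'v) \<Rightarrow> int)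
     \<Rightarrow> (((nat \<Rightarrow> real) \<Rightarrow> 'v) \<Rightarrow> int)" where
  "glue_sum E A T = (\<lambda>v. \<Sum>c\<in>PiE A (\<lambda>F. {w. T F w \<noteq> 0}). (\<Prod>F\<in>A. T F (c F)) * gen (glue E A c) v)"

definition fissile :: "nat set \<Rightarrow> (((nat \<Rightarrow> real) \<Rightarrow> 'v) \<Rightarrow> int) \<Rightarrow> bool" where
  "fissile E S \<longleftrightarrow> (\<forall>A. layout E A \<longrightarrow>
      lin (\<lambda>w. restrict w (\<Union>F\<in>A. face_pts E F)) S =
      glue_sum E A (\<lambda>F. lin (\<lambda>w. restrict w (face_pts E F)) S))"

text \<open>Points of \<open>U \<wr> X = (U \<times> X)/(U \<times> {x0})\<close> for nonempty U: the collapsed basepoint is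
  \<open>None\<close>, the other points are \<open>Some (u, x)\<close> with \<open>x \<noteq> x0\<close>.\<close>
definition halfsmash_pts :: "'u set \<Rightarrow> 'a set \<Rightarrow> 'a \<Rightarrow> ('u \<times> 'a) option set" where
  "halfsmash_pts U X x0 = insert None (Some ` (U \<times> (X - {x0})))"

definition sharp :: "'b \<Rightarrow> ('u \<Rightarrow> 'a \<Rightarrow> 'b) \<Rightarrow> ('u \<times> 'a) option \<Rightarrow> 'b" where
  "sharp y0 w = (\<lambda>p. case p of None \<Rightarrow> y0 | Some (u, x) \<Rightarrow> w u x)"

definition filt_X :: "nat \<Rightarrow> nat set \<Rightarrow> 'a topology \<Rightarrow> 'a \<Rightarrow> 'b topology \<Rightarrow> 'b
     \<Rightarrow> (((nat \<Rightarrow> real) \<Rightarrow> ('a \<Rightarrow> 'b)) \<Rightarrow> int) set" where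
  "filt_X s E X x0 Y y0 =
     {T \<in> free_ab (unbased_maps (simplex_top E) (map_space X x0 Y y0)).
        lin (sharp y0) T \<in> filt s (halfsmash_pts (simplex_pts E) (topspace X) x0) None
                               (sharp y0 ` unbased_maps (simplex_top E) (map_space X x0 Y y0))}"

definition strongly_similar :: "nat \<Rightarrow> 'a topology \<Rightarrow> 'a \<Rightarrow> 'b topology \<Rightarrow> 'b
     \<Rightarrow> ('a \<Rightarrow> 'b) \<Rightarrow> ('a \<Rightarrow> 'b) \<Rightarrow> bool" where
  "strongly_similar r X x0 Y y0 a b \<longleftrightarrow>
     (\<forall>E::nat set. finite E \<and> E \<noteq> {} \<longrightarrow>
        (\<exists>S. S \<in> free_ab (unbased_maps (simplex_top E)
                   (subtopology (map_space X x0 Y y0)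
                      (path_component_of_set (map_space X x0 Y y0) a))) \<and>
             fissile E S \<and>
             (\<lambda>w. gen (restrict (\<lambda>_. b) (simplex_pts E)) w - S w) \<in> filt_X (r + 1) E X x0 Y y0))"

end

theory Submission imports Defs "HOL-Library.FuncSet" begin

definition supp :: "('w \<Rightarrow> int) \<Rightarrow> 'w set" where "supp V = {w. V w \<noteq> 0}"

lemma lin_sup:
  assumes "finite B" "supp V \<subseteq> B"
  shows "lin f V v = (\<Sum>w\<in>B. if f w = v then V w else 0)"
proof -
  have "lin f V v = (\<Sum>w\<in>{w\<in>B. f w = v}. V w)"
    unfolding lin_def using assms
    by (intro sum.mono_neutral_left) (auto simp: supp_def)
  also have "\<dots> = (\<Sum>w\<in>B. if f w = v then V w else 0)"
    using assms(1) by (simp add: sum.inter_filter)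
  finally show ?thesis .
qed

lemma supp_lin: "supp (lin f V) \<subseteq> f ` supp V"
proof
  fix v assume "v \<in> supp (lin f V)"
  then have "{w. V w \<noteq> 0 \<and> f w = v} \<noteq> {}" unfolding supp_def lin_def by force
  then show "v \<in> f ` supp V" unfolding supp_def by auto
qed

lemma finite_supp_lin: "finite (supp V) \<Longrightarrow> finite (supp (lin f V))"
  by (meson finite_imageI finite_subset supp_lin)

lemma lin_comp:
  assumes "finite (supp V)"
  shows "lin f (lin g V) = lin (f \<circ> g) V"
proof
  fix v
  let ?B = "supp V"
  have "lin f (lin g V) v = (\<Sum>u\<in>g ` ?B. if f u = v then lin g V u else 0)"
    by (intro lin_sup) (use assms supp_lin[of g V] in auto)
  also have "\<dots> = (\<Sum>u\<in>g ` ?B. if f u = v then (\<Sum>w\<in>?B. if g w = u then V w else 0) else 0)"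
    using assms by (intro sum.cong refl) (simp add: lin_sup[OF assms])
  also have "\<dots> = (\<Sum>u\<in>g ` ?B. (\<Sum>w\<in>?B. if g w = u then (if f (g w) = v then V w else 0) else 0))"
    apply (intro sum.cong refl)
    subgoal for u by (cases "f u = v") (auto intro!: sum.cong sum.neutral)
    done
  also have "\<dots> = (\<Sum>w\<in>?B. \<Sum>u\<in>g ` ?B. if g w = u then (if f (g w) = v then V w else 0) else 0)"
    by (rule sum.swap)
  also have "\<dots> = (\<Sum>w\<in>?B. if f (g w) = v then V w else 0)"
    using assms by (intro sum.cong refl) (simp add: sum.delta')
  also have "\<dots> = lin (f \<circ> g) V v"
    using assms by (simp add: lin_sup[OF assms])
  finally show "lin f (lin g V) v = lin (f \<circ> g) V v" .
qed

lemma lin_cong: "(\<And>w. V w \<noteq> 0 \<Longrightarrow> f w = f' w) \<Longrightarrow> lin f V = lin f' V"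
  unfolding lin_def by (intro ext sum.cong) auto

lemma lin_zero: "lin f (\<lambda>_. 0) = (\<lambda>_. 0)"
  unfolding lin_def by simp

lemma lin_gen: "lin f (gen w) = gen (f w)"
  unfolding lin_def gen_def by (auto intro!: ext)

lemma lin_diff:
  assumes "finite (supp V)" "finite (supp W)"
  shows "lin f (\<lambda>w. V w - W w) = (\<lambda>v. lin f V v - lin f W v)"
proof
  fix v
  let ?B = "supp V \<union> supp W"
  have s: "supp (\<lambda>w. V w - W w) \<subseteq> ?B" by (auto simp: supp_def)
  show "lin f (\<lambda>w. V w - W w) v = lin f V v - lin f W v"
    using assms
    by (simp add: lin_sup[OF _ s] lin_sup[of ?B V] lin_sup[of ?B W] sum_subtractf[symmetric]
         if_distrib supp_def cong: if_cong)
qed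

lemma lin_sumgen:
  assumes "finite C"
  shows "lin f (\<lambda>v. \<Sum>c\<in>C. \<alpha> c * gen (x c) v) = (\<lambda>v. \<Sum>c\<in>C. \<alpha> c * gen (f (x c)) v)"
proof
  fix v
  have s: "supp (\<lambda>v. \<Sum>c\<in>C. \<alpha> c * gen (x c) v) \<subseteq> x ` C"
  proof
    fix w assume "w \<in> supp (\<lambda>v. \<Sum>c\<in>C. \<alpha> c * gen (x c) v)"
    then have "(\<Sum>c\<in>C. \<alpha> c * gen (x c) w) \<noteq> 0" by (simp add: supp_def)
    then obtain c where "c \<in> C" "\<alpha> c * gen (x c) w \<noteq> 0" by (meson sum.neutral)
    then show "w \<in> x ` C" by (auto simp: gen_def split: if_splits)
  qed
  have "lin f (\<lambda>v. \<Sum>c\<in>C. \<alpha> c * gen (x c) v) v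
     = (\<Sum>w\<in>x ` C. if f w = v then (\<Sum>c\<in>C. \<alpha> c * gen (x c) w) else 0)"
    using assms s by (intro lin_sup) auto
  also have "\<dots> = (\<Sum>w\<in>x ` C. \<Sum>c\<in>C. if f w = v then \<alpha> c * gen (x c) w else 0)"
    by (intro sum.cong refl) auto
  also have "\<dots> = (\<Sum>c\<in>C. \<Sum>w\<in>x ` C. if f w = v then \<alpha> c * gen (x c) w else 0)"
    by (rule sum.swap)
  also have "\<dots> = (\<Sum>c\<in>C. \<alpha> c * gen (f (x c)) v)"
  proof (intro sum.cong refl)
    fix c assume c: "c \<in> C"
    have "(\<Sum>w\<in>x ` C. if f w = v then \<alpha> c * gen (x c) w else 0)
        = (\<Sum>w\<in>x ` C. if w = x c then (if f (x c) = v then \<alpha> c else 0) else 0)"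
      by (intro sum.cong refl) (auto simp: gen_def)
    also have "\<dots> = (if f (x c) = v then \<alpha> c else 0)"
      using assms c by (simp add: sum.delta')
    finally show "(\<Sum>w\<in>x ` C. if f w = v then \<alpha> c * gen (x c) w else 0) = \<alpha> c * gen (f (x c)) v"
      by (simp add: gen_def)
  qed
  finally show "lin f (\<lambda>v. \<Sum>c\<in>C. \<alpha> c * gen (x c) v) v = (\<Sum>c\<in>C. \<alpha> c * gen (f (x c)) v)" .
qed

lemma lin_fib: "lin f V y = (\<Sum>w\<in>{w\<in>supp V. f w = y}. V w)"
  unfolding lin_def supp_def by simp

lemma multilin:
  fixes T :: "'i \<Rightarrow> 'w \<Rightarrow> int" and f :: "'i \<Rightarrow> 'w \<Rightarrow> 'v" and h :: "('i \<Rightarrow> 'v) \<Rightarrow> int"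
  assumes A: "finite A" and fin: "\<And>F. F \<in> A \<Longrightarrow> finite (supp (T F))"
  shows "(\<Sum>c\<in>PiE A (\<lambda>F. supp (T F)). (\<Prod>F\<in>A. T F (c F)) * h (restrict (\<lambda>F. f F (c F)) A))
       = (\<Sum>c'\<in>PiE A (\<lambda>F. supp (lin (f F) (T F))). (\<Prod>F\<in>A. lin (f F) (T F) (c' F)) * h c')"
proof -
  define B where "B F = supp (T F)" for F
  define B' where "B' F = f F ` B F" for F
  define fib where "fib F y = {w\<in>B F. f F w = y}" for F y
  let ?g = "\<lambda>c. restrict (\<lambda>F. f F (c F)) A"
  have finB: "F \<in> A \<Longrightarrow> finite (B F)" for F using fin by (simp add: B_def)
  have finB': "F \<in> A \<Longrightarrow> finite (B' F)" for F using finB by (simp add: B'_def)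
  have finfib: "F \<in> A \<Longrightarrow> finite (fib F y)" for F y using finB by (simp add: fib_def)
  have linF: "lin (f F) (T F) y = (\<Sum>w\<in>fib F y. T F w)" for F y
    by (simp add: lin_fib fib_def B_def)
  have "(\<Sum>c'\<in>PiE A (\<lambda>F. supp (lin (f F) (T F))). (\<Prod>F\<in>A. lin (f F) (T F) (c' F)) * h c')
      = (\<Sum>c'\<in>PiE A B'. (\<Prod>F\<in>A. lin (f F) (T F) (c' F)) * h c')"
  proof (rule sum.mono_neutral_left)
    show "finite (PiE A B')" using A finB' by (simp add: finite_PiE)
    show "PiE A (\<lambda>F. supp (lin (f F) (T F))) \<subseteq> PiE A B'"
      by (auto simp: B'_def B_def PiE_def Pi_def intro: subsetD[OF supp_lin])
    show "\<forall>c'\<in>PiE A B' - PiE A (\<lambda>F. supp (lin (f F) (T F))). (\<Prod>F\<in>A. lin (f F) (T F) (c' F)) * h c' = 0"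
    proof
      fix c' assume "c' \<in> PiE A B' - PiE A (\<lambda>F. supp (lin (f F) (T F)))"
      then obtain F where "F \<in> A" "c' F \<notin> supp (lin (f F) (T F))"
        by (auto simp: PiE_def Pi_def)
      then show "(\<Prod>F\<in>A. lin (f F) (T F) (c' F)) * h c' = 0"
        using A by (auto simp: supp_def)
    qed
  qed
  also have "\<dots> = (\<Sum>c'\<in>PiE A B'. \<Sum>c\<in>PiE A (\<lambda>F. fib F (c' F)). (\<Prod>F\<in>A. T F (c F)) * h c')"
    by (intro sum.cong refl)
       (simp add: linF prod_sum_PiE[OF A finfib] sum_distrib_right)
  also have "\<dots> = (\<Sum>c'\<in>PiE A B'. \<Sum>c\<in>{c. c \<in> PiE A B \<and> ?g c = c'}. (\<Prod>F\<in>A. T F (c F)) * h (?g c))"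
  proof (rule sum.cong[OF refl])
    fix c' assume c': "c' \<in> PiE A B'"
    have gc: "?g c = c'" if c: "c \<in> PiE A (\<lambda>F. fib F (c' F))" for c
    proof
      fix F show "?g c F = c' F"
        using c c' by (cases "F \<in> A") (auto simp: PiE_def Pi_def fib_def extensional_def)
    qed
    have eq: "{c. c \<in> PiE A B \<and> ?g c = c'} = PiE A (\<lambda>F. fib F (c' F))"
    proof (intro set_eqI iffI)
      fix c assume "c \<in> {c. c \<in> PiE A B \<and> ?g c = c'}"
      then show "c \<in> PiE A (\<lambda>F. fib F (c' F))"
        by (auto simp: PiE_def Pi_def fib_def restrict_def)
    next
      fix c assume c: "c \<in> PiE A (\<lambda>F. fib F (c' F))"
      then show "c \<in> {c. c \<in> PiE A B \<and> ?g c = c'}"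
        using gc[OF c] by (auto simp: PiE_def Pi_def fib_def)
    qed
    have "(\<Sum>c\<in>PiE A (\<lambda>F. fib F (c' F)). (\<Prod>F\<in>A. T F (c F)) * h c')
        = (\<Sum>c\<in>PiE A (\<lambda>F. fib F (c' F)). (\<Prod>F\<in>A. T F (c F)) * h (?g c))"
      by (rule sum.cong[OF refl]) (simp add: gc)
    then show "(\<Sum>c\<in>PiE A (\<lambda>F. fib F (c' F)). (\<Prod>F\<in>A. T F (c F)) * h c')
        = (\<Sum>c\<in>{c. c \<in> PiE A B \<and> ?g c = c'}. (\<Prod>F\<in>A. T F (c F)) * h (?g c))"
      by (simp only: eq)
  qed
  also have "\<dots> = (\<Sum>c\<in>PiE A B. (\<Prod>F\<in>A. T F (c F)) * h (?g c))"
  proof (rule sum.group)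
    show "finite (PiE A B)" using A finB by (simp add: finite_PiE)
    show "finite (PiE A B')" using A finB' by (simp add: finite_PiE)
    show "?g ` PiE A B \<subseteq> PiE A B'" by (auto simp: B'_def PiE_def Pi_def)
  qed
  finally show ?thesis by (simp add: B_def[abs_def])
qed


lemma topspace_map_space: "topspace (map_space X x0 Y y0) = based_maps X x0 Y y0"
  unfolding map_space_def compact_open_top_def topology_generated_by_topspace
proof (intro set_eqI iffI)
  fix f assume "f \<in> \<Union>{{f \<in> based_maps X x0 Y y0. f ` K \<subseteq> U} |K U. compactin X K \<and> openin Y U}"
  then show "f \<in> based_maps X x0 Y y0" by auto
next
  fix f assume f: "f \<in> based_maps X x0 Y y0"
  have "{f \<in> based_maps X x0 Y y0. f ` {} \<subseteq> {}} \<in> {{f \<in> based_maps X x0 Y y0. f ` K \<subseteq> U} |K U. compactin X K \<and> openin Y U}"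
    by blast
  then show "f \<in> \<Union>{{f \<in> based_maps X x0 Y y0. f ` K \<subseteq> U} |K U. compactin X K \<and> openin Y U}"
    using f by blast
qed

lemma topspace_simplex: "topspace (simplex_top E) = simplex_pts E"
  unfolding simplex_top_def simplex_pts_def by auto

lemma path_comp_image:
  assumes "path_component_of M a x" "continuous_map M M' g"
  shows "path_component_of M' (g a) (g x)"
proof -
  obtain p where "pathin M p" "p 0 = a" "p 1 = x" using assms(1) path_component_of_set by metis
  then have "pathin M' (g \<circ> p)" "(g \<circ> p) 0 = g a" "(g \<circ> p) 1 = g x"
    using pathin_compose assms(2) by auto
  then show ?thesis using path_component_of_set by metis
qed

lemma Phi_unbased:
  assumes w: "w \<in> unbased_maps U (subtopology M P)" and g: "continuous_map M M' g"
    and gP: "g ` (P \<inter> topspace M) \<subseteq> P'"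
  shows "restrict (\<lambda>t. g (w t)) (topspace U) \<in> unbased_maps U (subtopology M' P')"
proof -
  have c: "continuous_map U (subtopology M P) w" using w by (simp add: unbased_maps_def)
  then have c1: "continuous_map U M w" "w ` topspace U \<subseteq> P"
    by (auto simp: continuous_map_in_subtopology)
  have "continuous_map U M' (g \<circ> w)" using c1 g continuous_map_compose by blast
  moreover have "(g \<circ> w) ` topspace U \<subseteq> P'"
    using c1 gP continuous_map_image_subset_topspace[OF c1(1)] by (auto simp: image_subset_iff)
  ultimately have "continuous_map U (subtopology M' P') (g \<circ> w)"
    by (auto simp: continuous_map_in_subtopology image_subset_iff)
  then have "continuous_map U (subtopology M' P') (restrict (\<lambda>t. g (w t)) (topspace U))"
    by (rule continuous_map_eq) auto
  then show ?thesis by (simp add: unbased_maps_def)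
qed

lemma glue_Phi:
  "restrict (\<lambda>t. g (glue E A c t)) (\<Union>F\<in>A. face_pts E F)
   = glue E A (restrict (\<lambda>F. restrict (\<lambda>t. g (c F t)) (face_pts E F)) A)"
proof
  fix t
  show "restrict (\<lambda>t. g (glue E A c t)) (\<Union>F\<in>A. face_pts E F) t
      = glue E A (restrict (\<lambda>F. restrict (\<lambda>t. g (c F t)) (face_pts E F)) A) t"
  proof (cases "\<exists>F\<in>A. t \<in> face_pts E F")
    case True
    define F0 where "F0 = (SOME F. F \<in> A \<and> t \<in> face_pts E F)"
    have F0: "F0 \<in> A \<and> t \<in> face_pts E F0" unfolding F0_def using True by (rule someI_ex[OF bexE]) blast
    have "glue E A c t = c F0 t" using True unfolding glue_def F0_def by simp
    moreover have "glue E A (restrict (\<lambda>F. restrict (\<lambda>t. g (c F t)) (face_pts E F)) A) t = g (c F0 t)"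
      using True F0 unfolding glue_def F0_def[symmetric] by simp
    ultimately show ?thesis using F0 by auto
  next
    case False
    then show ?thesis unfolding glue_def by auto
  qed
qed


lemma free_ab_supp: "V \<in> free_ab W \<longleftrightarrow> finite (supp V) \<and> supp V \<subseteq> W"
  by (simp add: free_ab_def supp_def)

lemma sharp_supp: "supp (\<lambda>w. gen c w - S w) \<subseteq> insert c (supp S)"
  by (auto simp: supp_def gen_def)

lemma supp_gen: "supp (gen c) = {c}"
  unfolding supp_def gen_def by auto

theorem lemma4p3:
  fixes X :: "'a topology" and Y :: "'b topology" and X' :: "'c topology" and Y' :: "'d topology"
    and g :: "('a \<Rightarrow> 'b) \<Rightarrow> ('c \<Rightarrow> 'd)" and r :: nat
  assumes "cellular_space X x0" and "cellular_space Y y0"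
    and "cellular_space X' x0'" and "cellular_space Y' y0'"
    and "compact_space X" and "compact_space X'"
    and "primitive_transform X x0 Y y0 X' x0' Y' y0' g"
    and "a \<in> based_maps X x0 Y y0" and "b \<in> based_maps X x0 Y y0"
    and "strongly_similar r X x0 Y y0 a b"
  shows "strongly_similar r X' x0' Y' y0' (g a) (g b)"
proof -
  define MS where "MS = map_space X x0 Y y0"
  define MS' where "MS' = map_space X' x0' Y' y0'"
  have gc: "continuous_map MS MS' g"
    using assms(7) by (simp add: primitive_transform_def transform_def MS_def MS'_def)
  obtain kk hh where khp: "\<And>p. p \<in> topspace X' \<Longrightarrow> kk p \<in> topspace X \<and>
      (\<forall>d\<in>based_maps X x0 Y y0. g d p = hh p (d (kk p)))"
    using assms(7) unfolding primitive_transform_def by metis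
  have tMS: "topspace MS = based_maps X x0 Y y0" by (simp add: MS_def topspace_map_space)
  have pcimg: "g ` (path_component_of_set MS a \<inter> topspace MS) \<subseteq> path_component_of_set MS' (g a)"
    using path_comp_image[OF _ gc] by auto
  show ?thesis
    unfolding strongly_similar_def MS'_def[symmetric]
  proof (intro allI impI)
    fix E :: "nat set" assume E: "finite E \<and> E \<noteq> {}"
    obtain S where S1: "S \<in> free_ab (unbased_maps (simplex_top E) (subtopology MS (path_component_of_set MS a)))"
      and S2: "fissile E S"
      and S3: "(\<lambda>w. gen (restrict (\<lambda>_. b) (simplex_pts E)) w - S w) \<in> filt_X (r + 1) E X x0 Y y0"
      using assms(10) E unfolding strongly_similar_def MS_def[symmetric] by blast
    define T where "T = (\<lambda>w. gen (restrict (\<lambda>_. b) (simplex_pts E)) w - S w)"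
    define \<Phi> where "\<Phi> w = restrict (\<lambda>t. g (w t)) (simplex_pts E)" for w :: "(nat \<Rightarrow> real) \<Rightarrow> 'a \<Rightarrow> 'b"
    define S' where "S' = lin \<Phi> S"
    have finS: "finite (supp S)" and suppS: "supp S \<subseteq> unbased_maps (simplex_top E) (subtopology MS (path_component_of_set MS a))"
      using S1 by (auto simp: free_ab_supp)
    have finT: "finite (supp T)"
      unfolding T_def using finS sharp_supp by (metis finite_insert finite_subset)
    have Phi_gen: "\<Phi> (restrict (\<lambda>_. b) (simplex_pts E)) = restrict (\<lambda>_. g b) (simplex_pts E)"
      unfolding \<Phi>_def by auto
    have T': "(\<lambda>w. gen (restrict (\<lambda>_. g b) (simplex_pts E)) w - S' w) = lin \<Phi> T"
    proof -
      have fg: "finite (supp (gen (restrict (\<lambda>_. b) (simplex_pts E))))" by (simp add: supp_gen)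
      have "lin \<Phi> T = (\<lambda>v. lin \<Phi> (gen (restrict (\<lambda>_. b) (simplex_pts E))) v - lin \<Phi> S v)"
        unfolding T_def using lin_diff[OF fg finS] by blast
      then show ?thesis by (simp only: lin_gen Phi_gen S'_def)
    qed
    show "\<exists>S. S \<in> free_ab (unbased_maps (simplex_top E) (subtopology MS' (path_component_of_set MS' (g a)))) \<and>
             fissile E S \<and>
             (\<lambda>w. gen (restrict (\<lambda>_. g b) (simplex_pts E)) w - S w) \<in> filt_X (r + 1) E X' x0' Y' y0'"
    proof (intro exI conjI)
      show "S' \<in> free_ab (unbased_maps (simplex_top E) (subtopology MS' (path_component_of_set MS' (g a))))"
        unfolding free_ab_supp S'_def
      proof
        show "finite (supp (lin \<Phi> S))" using finS by (rule finite_supp_lin)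
        have "\<Phi> ` supp S \<subseteq> unbased_maps (simplex_top E) (subtopology MS' (path_component_of_set MS' (g a)))"
        proof
          fix v assume "v \<in> \<Phi> ` supp S"
          then obtain w where w: "w \<in> supp S" "v = \<Phi> w" by auto
          show "v \<in> unbased_maps (simplex_top E) (subtopology MS' (path_component_of_set MS' (g a)))"
          proof -
            have "v = restrict (\<lambda>t. g (w t)) (topspace (simplex_top E))"
              using w(2) by (simp only: \<Phi>_def topspace_simplex)
            then show ?thesis using Phi_unbased[OF subsetD[OF suppS w(1)] gc pcimg] by (simp only:)
          qed
        qed
        then show "supp (lin \<Phi> S) \<subseteq> unbased_maps (simplex_top E) (subtopology MS' (path_component_of_set MS' (g a)))"
          by (rule subset_trans[OF supp_lin])
      qed
    next
      show "fissile E S'" unfolding fissile_def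
      proof (intro allI impI)
        fix A assume lay: "layout E A"
        have "A \<subseteq> Pow E" using lay by (auto simp: layout_def)
        then have finA: "finite A" using E by (meson finite_Pow_iff finite_subset)
        define U where "U = (\<Union>F\<in>A. face_pts E F)"
        define \<Phi>U where "\<Phi>U v = restrict (\<lambda>t. g (v t)) U" for v :: "(nat \<Rightarrow> real) \<Rightarrow> 'a \<Rightarrow> 'b"
        define \<Phi>F where "\<Phi>F F v = restrict (\<lambda>t. g (v t)) (face_pts E F)" for F and v :: "(nat \<Rightarrow> real) \<Rightarrow> 'a \<Rightarrow> 'b"
        define T0 where "T0 F = lin (\<lambda>w. restrict w (face_pts E F)) S" for F
        have Usub: "U \<subseteq> simplex_pts E" by (auto simp: U_def face_pts_def)
        have c1: "(\<lambda>w. restrict w U) \<circ> \<Phi> = \<Phi>U \<circ> (\<lambda>w. restrict w U)"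
        proof (rule ext)
          fix w
          show "((\<lambda>w. restrict w U) \<circ> \<Phi>) w = (\<Phi>U \<circ> (\<lambda>w. restrict w U)) w"
            unfolding comp_def \<Phi>U_def \<Phi>_def
          proof (rule ext)
            fix t show "restrict (restrict (\<lambda>t. g (w t)) (simplex_pts E)) U t = restrict (\<lambda>t. g (restrict w U t)) U t"
              using Usub by (cases "t \<in> U") auto
          qed
        qed
        have c2: "(\<lambda>w. restrict w (face_pts E F)) \<circ> \<Phi> = \<Phi>F F \<circ> (\<lambda>w. restrict w (face_pts E F))" for F
        proof (rule ext)
          fix w
          show "((\<lambda>w. restrict w (face_pts E F)) \<circ> \<Phi>) w = (\<Phi>F F \<circ> (\<lambda>w. restrict w (face_pts E F))) w"
            unfolding comp_def \<Phi>F_def \<Phi>_def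
          proof (rule ext)
            fix t show "restrict (restrict (\<lambda>t. g (w t)) (simplex_pts E)) (face_pts E F) t = restrict (\<lambda>t. g (restrict w (face_pts E F) t)) (face_pts E F) t"
              by (cases "t \<in> face_pts E F") (auto simp: face_pts_def)
          qed
        qed
        have finT0: "finite (supp (T0 F))" for F unfolding T0_def by (rule finite_supp_lin[OF finS])
        have fisS: "lin (\<lambda>w. restrict w U) S = glue_sum E A T0"
          using S2[unfolded fissile_def, rule_format, OF lay] unfolding U_def T0_def[abs_def] .
        have L: "lin (\<lambda>w. restrict w U) S' = lin \<Phi>U (glue_sum E A T0)"
        proof -
          have "lin (\<lambda>w. restrict w U) S' = lin ((\<lambda>w. restrict w U) \<circ> \<Phi>) S"
            unfolding S'_def by (rule lin_comp[OF finS])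
          also have "\<dots> = lin (\<Phi>U \<circ> (\<lambda>w. restrict w U)) S" by (simp only: c1)
          also have "\<dots> = lin \<Phi>U (lin (\<lambda>w. restrict w U) S)" by (rule lin_comp[OF finS, symmetric])
          finally show ?thesis by (simp only: fisS)
        qed
        have R: "(\<lambda>F. lin (\<lambda>w. restrict w (face_pts E F)) S') = (\<lambda>F. lin (\<Phi>F F) (T0 F))"
        proof (rule ext)
          fix F
          have "lin (\<lambda>w. restrict w (face_pts E F)) S' = lin ((\<lambda>w. restrict w (face_pts E F)) \<circ> \<Phi>) S"
            unfolding S'_def by (rule lin_comp[OF finS])
          also have "\<dots> = lin (\<Phi>F F \<circ> (\<lambda>w. restrict w (face_pts E F))) S" by (simp only: c2)
          also have "\<dots> = lin (\<Phi>F F) (T0 F)" unfolding T0_def by (rule lin_comp[OF finS, symmetric])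
          finally show "lin (\<lambda>w. restrict w (face_pts E F)) S' = lin (\<Phi>F F) (T0 F)" .
        qed
        have G0: "glue_sum E A T0 = (\<lambda>v. \<Sum>c\<in>PiE A (\<lambda>F. supp (T0 F)). (\<Prod>F\<in>A. T0 F (c F)) * gen (glue E A c) v)"
          unfolding glue_sum_def supp_def ..
        have finP: "finite (PiE A (\<lambda>F. supp (T0 F)))" using finA finT0 by (simp add: finite_PiE)
        have "lin \<Phi>U (glue_sum E A T0)
            = (\<lambda>v. \<Sum>c\<in>PiE A (\<lambda>F. supp (T0 F)). (\<Prod>F\<in>A. T0 F (c F)) * gen (\<Phi>U (glue E A c)) v)"
          unfolding G0 by (rule lin_sumgen[OF finP])
        also have "\<dots> = (\<lambda>v. \<Sum>c\<in>PiE A (\<lambda>F. supp (T0 F)). (\<Prod>F\<in>A. T0 F (c F)) *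
                              gen (glue E A (restrict (\<lambda>F. \<Phi>F F (c F)) A)) v)"
          unfolding \<Phi>U_def \<Phi>F_def U_def glue_Phi ..
        also have "\<dots> = (\<lambda>v. \<Sum>c'\<in>PiE A (\<lambda>F. supp (lin (\<Phi>F F) (T0 F))).
                              (\<Prod>F\<in>A. lin (\<Phi>F F) (T0 F) (c' F)) * gen (glue E A c') v)"
          by (rule ext, rule multilin[OF finA finT0])
        also have "\<dots> = glue_sum E A (\<lambda>F. lin (\<Phi>F F) (T0 F))"
          unfolding glue_sum_def supp_def ..
        finally show "lin (\<lambda>w. restrict w (\<Union>F\<in>A. face_pts E F)) S' =
                      glue_sum E A (\<lambda>F. lin (\<lambda>w. restrict w (face_pts E F)) S')"
          unfolding U_def[symmetric] L R .
      qed
    next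
      have T1: "T \<in> free_ab (unbased_maps (simplex_top E) MS)"
        and T2: "\<forall>R\<in>fin_pointed r (halfsmash_pts (simplex_pts E) (topspace X) x0) None.
                  lin (\<lambda>d. restrict d R) (lin (sharp y0) T) = (\<lambda>_. 0)"
      proof -
        have S3': "T \<in> filt_X (r + 1) E X x0 Y y0" using S3 unfolding T_def .
        then have T1: "T \<in> free_ab (unbased_maps (simplex_top E) MS)"
          and T2': "lin (sharp y0) T \<in> filt (r + 1) (halfsmash_pts (simplex_pts E) (topspace X) x0) None
                               (sharp y0 ` unbased_maps (simplex_top E) MS)"
          unfolding filt_X_def MS_def by blast+
        from T2' have "\<forall>R\<in>fin_pointed r (halfsmash_pts (simplex_pts E) (topspace X) x0) None.
                  lin (\<lambda>d. restrict d R) (lin (sharp y0) T) = (\<lambda>_. 0)"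
          unfolding filt_def add_diff_cancel_right' by blast
        with T1 show "T \<in> free_ab (unbased_maps (simplex_top E) MS)" "\<forall>R\<in>fin_pointed r (halfsmash_pts (simplex_pts E) (topspace X) x0) None.
                  lin (\<lambda>d. restrict d R) (lin (sharp y0) T) = (\<lambda>_. 0)" by blast+
      qed
      have suppT: "supp T \<subseteq> unbased_maps (simplex_top E) MS" using T1 by (simp add: free_ab_supp)
      have PhiU: "\<Phi> w \<in> unbased_maps (simplex_top E) MS'" if w: "w \<in> unbased_maps (simplex_top E) MS" for w
      proof -
        have "\<Phi> w = restrict (\<lambda>t. g (w t)) (topspace (simplex_top E))"
          by (simp only: \<Phi>_def topspace_simplex)
        moreover have "restrict (\<lambda>t. g (w t)) (topspace (simplex_top E)) \<in> unbased_maps (simplex_top E) (subtopology MS' UNIV)"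
          by (rule Phi_unbased[of w _ MS UNIV]) (simp_all only: subtopology_UNIV w gc subset_UNIV)
        ultimately show ?thesis by (simp only: subtopology_UNIV)
      qed
      have wu: "w u \<in> based_maps X x0 Y y0" if w: "w \<in> unbased_maps (simplex_top E) MS" and u: "u \<in> simplex_pts E" for w u
      proof -
        have "continuous_map (simplex_top E) MS w" using w by (simp add: unbased_maps_def)
        then have "w ` topspace (simplex_top E) \<subseteq> topspace MS" by (rule continuous_map_image_subset_topspace)
        then show ?thesis using u tMS topspace_simplex by blast
      qed
      have finLT: "finite (supp (lin \<Phi> T))" by (rule finite_supp_lin[OF finT])
      have suppLT: "supp (lin \<Phi> T) \<subseteq> unbased_maps (simplex_top E) MS'"
      proof -
        have "\<Phi> ` supp T \<subseteq> unbased_maps (simplex_top E) MS'" using suppT PhiU by blast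
        then show ?thesis by (rule subset_trans[OF supp_lin])
      qed
      show "(\<lambda>w. gen (restrict (\<lambda>_. g b) (simplex_pts E)) w - S' w) \<in> filt_X (r + 1) E X' x0' Y' y0'"
        unfolding T' filt_X_def filt_def MS'_def[symmetric] mem_Collect_eq
      proof (intro conjI ballI)
        show "lin \<Phi> T \<in> free_ab (unbased_maps (simplex_top E) MS')"
          using finLT suppLT by (simp add: free_ab_supp)
        show "lin (sharp y0') (lin \<Phi> T) \<in> free_ab (sharp y0' ` unbased_maps (simplex_top E) MS')"
          unfolding free_ab_supp
          by (intro conjI finite_supp_lin[OF finLT] subset_trans[OF supp_lin image_mono[OF suppLT]])
      next
        fix R assume R: "R \<in> fin_pointed (r + 1 - 1) (halfsmash_pts (simplex_pts E) (topspace X') x0') None"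
        define \<kappa> where "\<kappa> q = (case q of None \<Rightarrow> None | Some (u, p) \<Rightarrow> if kk p = x0 then None else Some (u, kk p))"
          for q :: "((nat \<Rightarrow> real) \<times> 'c) option"
        define R0 where "R0 = \<kappa> ` R"
        define \<Psi> where "\<Psi> v = restrict (\<lambda>q. case q of None \<Rightarrow> y0' | Some (u, p) \<Rightarrow> hh p (v (\<kappa> q))) R"
          for v :: "((nat \<Rightarrow> real) \<times> 'a) option \<Rightarrow> 'b"
        have Rf: "finite R" "R \<subseteq> halfsmash_pts (simplex_pts E) (topspace X') x0'" "None \<in> R" "card R \<le> r + 1"
          using R by (auto simp: fin_pointed_def)
        have R0: "R0 \<in> fin_pointed r (halfsmash_pts (simplex_pts E) (topspace X) x0) None"
          unfolding fin_pointed_def mem_Collect_eq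
        proof (intro conjI)
          show "finite R0" using Rf by (simp add: R0_def)
          show "None \<in> R0" unfolding R0_def using Rf(3) by (rule rev_image_eqI) (simp add: \<kappa>_def)
          show "card R0 \<le> r + 1" using Rf card_image_le[OF Rf(1), of \<kappa>] by (simp add: R0_def)
          show "R0 \<subseteq> halfsmash_pts (simplex_pts E) (topspace X) x0"
          proof
            fix q0 assume "q0 \<in> R0"
            then obtain q where q: "q \<in> R" "q0 = \<kappa> q" by (auto simp: R0_def)
            show "q0 \<in> halfsmash_pts (simplex_pts E) (topspace X) x0"
            proof (cases q)
              case None then show ?thesis using q by (simp add: \<kappa>_def halfsmash_pts_def)
            next
              case (Some up)
              then obtain u p where up: "q = Some (u, p)" by (cases up) auto
              then have "u \<in> simplex_pts E" "p \<in> topspace X'" using q Rf(2) by (auto simp: halfsmash_pts_def)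
              moreover have "kk p \<in> topspace X" using khp[of p] \<open>p \<in> topspace X'\<close> by blast
              ultimately show ?thesis using q up by (auto simp: \<kappa>_def halfsmash_pts_def)
            qed
          qed
        qed
        have key: "restrict (sharp y0' (\<Phi> w)) R = \<Psi> (restrict (sharp y0 w) R0)"
          if w: "w \<in> unbased_maps (simplex_top E) MS" for w
        proof
          fix q
          show "restrict (sharp y0' (\<Phi> w)) R q = \<Psi> (restrict (sharp y0 w) R0) q"
          proof (cases "q \<in> R")
            case False then show ?thesis by (simp add: \<Psi>_def)
          next
            case True
            show ?thesis
            proof (cases q)
              case None then show ?thesis using True by (simp add: \<Psi>_def sharp_def)
            next
              case (Some up)
              then obtain u p where up: "q = Some (u, p)" by (cases up) auto
              then have u: "u \<in> simplex_pts E" and p: "p \<in> topspace X'"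
                using True Rf(2) by (auto simp: halfsmash_pts_def)
              have wub: "w u \<in> based_maps X x0 Y y0" by (rule wu[OF w u])
              then have wx0: "w u x0 = y0" by (simp add: based_maps_def)
              have k: "\<kappa> q \<in> R0" using True by (simp add: R0_def)
              have "sharp y0 w (\<kappa> q) = w u (kk p)"
                using wx0 by (cases "kk p = x0") (auto simp: \<kappa>_def sharp_def up)
              moreover have "g (w u) p = hh p (w u (kk p))" using khp[OF p] wub by blast
              ultimately show ?thesis
                using True k u by (simp add: \<Psi>_def sharp_def up \<Phi>_def)
            qed
          qed
        qed
        have "lin (\<lambda>d. restrict d R) (lin (sharp y0') (lin \<Phi> T))
            = lin ((\<lambda>d. restrict d R) \<circ> (sharp y0' \<circ> \<Phi>)) T"
          by (simp only: lin_comp[OF finT] lin_comp[OF finLT])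
        also have "\<dots> = lin (\<Psi> \<circ> ((\<lambda>d. restrict d R0) \<circ> sharp y0)) T"
        proof (rule lin_cong)
          fix w assume "T w \<noteq> 0"
          then have "w \<in> unbased_maps (simplex_top E) MS" using suppT by (auto simp: supp_def)
          then show "((\<lambda>d. restrict d R) \<circ> (sharp y0' \<circ> \<Phi>)) w = (\<Psi> \<circ> ((\<lambda>d. restrict d R0) \<circ> sharp y0)) w"
            using key by simp
        qed
        also have "\<dots> = lin \<Psi> (lin (\<lambda>d. restrict d R0) (lin (sharp y0) T))"
          using finT finite_supp_lin[OF finT] by (simp only: lin_comp)
        also have "\<dots> = (\<lambda>_. 0)" using T2 R0 by (simp add: lin_zero)
        finally show "lin (\<lambda>d. restrict d R) (lin (sharp y0') (lin \<Phi> T)) = (\<lambda>_. 0)" .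
      qed
    qed
  qed
qed

end
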